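(* Let $X,Y$ be normed spaces over $K$ and $F:X\to Y$ a map. If $F\in B(X,Y)$, then $F$ is topology bounded. Conversely, if $F$ is topology bounded and there is a positive constant $M$ such that $\|F(kx)\|_Y\le M|k|\,\|F(x)\|_Y$ for every scalar $k\neq 0$ and every $x\neq 0$ in $X$, then $F\in B(X,Y)$.
   Context: $K$ is $\mathbb{R}$ or $\mathbb{C}$; normed spaces are nontrivial. Maps need not be linear or continuous. $\|F\|_{B(X,Y)}=\max\left(\sup_{x\neq 0,x\in X}\frac{\|F(x)\|_Y}{\|x\|_X},\ \|F(0)\|_Y\right)\in[0,\infty]$ and $B(X,Y)$ is the set of maps $F:X\to Y$ with $\|F\|_{B(X,Y)}<\infty$. A map $F:X\to Y$ is topology bounded if it maps bounded subsets of $X$ to bounded subsets of $Y$. *)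

theory Defs
  imports "HOL-Analysis.Analysis"
begin

class complex_normed_vector = real_normed_vector +
  fixes scaleC :: "complex \<Rightarrow> 'a \<Rightarrow> 'a" (infixr \<open>*\<^sub>C\<close> 75)
  assumes scaleR_scaleC: "scaleR r x = scaleC (complex_of_real r) x"
    and scaleC_add_right: "scaleC a (x + y) = scaleC a x + scaleC a y"
    and scaleC_add_left: "scaleC (a + b) x = scaleC a x + scaleC b x"
    and scaleC_scaleC: "scaleC a (scaleC b x) = scaleC (a * b) x"
    and scaleC_one: "scaleC 1 x = x"
    and norm_scaleC: "norm (scaleC a x) = cmod a * norm x"

definition Bnorm :: "('a::real_normed_vector \<Rightarrow> 'b::real_normed_vector) \<Rightarrow> ereal" where
  "Bnorm F = max (SUP x\<in>{x. x \<noteq> 0}. ereal (norm (F x) / norm x)) (ereal (norm (F 0)))"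

definition in_B :: "('a::real_normed_vector \<Rightarrow> 'b::real_normed_vector) \<Rightarrow> bool" where
  "in_B F \<longleftrightarrow> Bnorm F < \<infinity>"

definition topology_bounded :: "('a::real_normed_vector \<Rightarrow> 'b::real_normed_vector) \<Rightarrow> bool" where
  "topology_bounded F \<longleftrightarrow> (\<forall>S. bounded S \<longrightarrow> bounded (F ` S))"

end

theory Submission
  imports Defs
begin

lemma in_B_iff:
  fixes F :: "'a::real_normed_vector \<Rightarrow> 'b::real_normed_vector"
  shows "in_B F \<longleftrightarrow> (\<exists>C. (\<forall>x. x \<noteq> 0 \<longrightarrow> norm (F x) \<le> C * norm x) \<and> norm (F 0) \<le> C)"
proof
  assume "in_B F"
  hence lt: "Bnorm F < \<infinity>" by (simp add: in_B_def)
  have ge: "ereal (norm (F 0)) \<le> Bnorm F" unfolding Bnorm_def by simp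
  hence "Bnorm F \<noteq> -\<infinity>" by auto
  with lt obtain C where C: "Bnorm F = ereal C" by (cases "Bnorm F") auto
  have "\<forall>x. x \<noteq> 0 \<longrightarrow> norm (F x) \<le> C * norm x"
  proof (intro allI impI)
    fix x :: 'a assume x: "x \<noteq> 0"
    have "ereal (norm (F x) / norm x) \<le> (SUP x\<in>{x. x \<noteq> 0}. ereal (norm (F x) / norm x))"
      using x by (intro SUP_upper) auto
    also have "\<dots> \<le> Bnorm F" unfolding Bnorm_def by simp
    finally have "norm (F x) / norm x \<le> C" using C by simp
    thus "norm (F x) \<le> C * norm x" using x by (simp add: divide_le_eq)
  qed
  moreover have "norm (F 0) \<le> C" using ge C by simp
  ultimately show "\<exists>C. (\<forall>x. x \<noteq> 0 \<longrightarrow> norm (F x) \<le> C * norm x) \<and> norm (F 0) \<le> C" by blast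
next
  assume "\<exists>C. (\<forall>x. x \<noteq> 0 \<longrightarrow> norm (F x) \<le> C * norm x) \<and> norm (F 0) \<le> C"
  then obtain C where C1: "\<forall>x. x \<noteq> 0 \<longrightarrow> norm (F x) \<le> C * norm x" and C2: "norm (F 0) \<le> C" by blast
  have "(SUP x\<in>{x. x \<noteq> 0}. ereal (norm (F x) / norm x)) \<le> ereal C"
  proof (rule SUP_least)
    fix x :: 'a assume "x \<in> {x. x \<noteq> 0}"
    hence x: "x \<noteq> 0" by simp
    hence "norm (F x) / norm x \<le> C" using C1 by (simp add: divide_le_eq)
    thus "ereal (norm (F x) / norm x) \<le> ereal C" by simp
  qed
  hence "Bnorm F \<le> ereal C" unfolding Bnorm_def using C2 by simp
  also have "ereal C < \<infinity>" by simp
  finally show "in_B F" unfolding in_B_def .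
qed

lemma inB_tb:
  fixes F :: "'a::real_normed_vector \<Rightarrow> 'b::real_normed_vector"
  assumes "in_B F" shows "topology_bounded F"
proof -
  obtain C where C1: "\<forall>x. x \<noteq> 0 \<longrightarrow> norm (F x) \<le> C * norm x" and C2: "norm (F 0) \<le> C"
    using assms in_B_iff by blast
  have C0: "C \<ge> 0" using C2 norm_ge_zero order_trans by blast
  have all: "norm (F x) \<le> C * norm x + C" for x
    using C1 C2 C0 by (cases "x = 0") (auto intro: add_increasing2 mult_nonneg_nonneg)
  show ?thesis unfolding topology_bounded_def
  proof (intro allI impI)
    fix S :: "'a set" assume "bounded S"
    then obtain r where r: "\<forall>x\<in>S. norm x \<le> r" by (auto simp: bounded_iff)
    have "\<forall>y\<in>F ` S. norm y \<le> C * r + C"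
    proof
      fix y assume "y \<in> F ` S"
      then obtain x where x: "x \<in> S" "y = F x" by auto
      have "C * norm x \<le> C * r" using r x C0 by (simp add: mult_left_mono)
      thus "norm y \<le> C * r + C" using all[of x] x by simp
    qed
    thus "bounded (F ` S)" by (auto simp: bounded_iff)
  qed
qed

lemma tb_bound:
  fixes F :: "'a::real_normed_vector \<Rightarrow> 'b::real_normed_vector"
  assumes "topology_bounded F"
  obtains R where "R \<ge> 0" "\<And>x. norm x \<le> 1 \<Longrightarrow> norm (F x) \<le> R"
proof -
  have "bounded (F ` cball 0 1)" using assms unfolding topology_bounded_def by simp
  then obtain R where R: "\<forall>y\<in>F ` cball 0 1. norm y \<le> R" by (auto simp: bounded_iff)
  have "norm (F 0) \<le> R" using R by auto
  hence "R \<ge> 0" using norm_ge_zero order_trans by blast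
  thus ?thesis using that R by auto
qed

lemma tb_real:
  fixes F :: "'a::real_normed_vector \<Rightarrow> 'b::real_normed_vector"
  assumes tb: "topology_bounded F" and M: "M > 0"
    and h: "\<forall>k::real. \<forall>x. k \<noteq> 0 \<and> x \<noteq> 0 \<longrightarrow> norm (F (k *\<^sub>R x)) \<le> M * \<bar>k\<bar> * norm (F x)"
  shows "in_B F"
proof -
  obtain R where R0: "R \<ge> 0" and R: "\<And>x. norm x \<le> 1 \<Longrightarrow> norm (F x) \<le> R"
    using tb_bound[OF tb] by blast
  have "\<forall>x. x \<noteq> 0 \<longrightarrow> norm (F x) \<le> (M * R) * norm x"
  proof (intro allI impI)
    fix x :: 'a assume x: "x \<noteq> 0"
    define u where "u = (1 / norm x) *\<^sub>R x"
    have u0: "u \<noteq> 0" using x by (simp add: u_def)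
    have nu: "norm u \<le> 1" using x by (simp add: u_def)
    have xu: "norm x *\<^sub>R u = x" using x by (simp add: u_def)
    have "norm (F x) \<le> M * \<bar>norm x\<bar> * norm (F u)"
      using h[rule_format, of "norm x" u] x u0 xu by simp
    also have "\<dots> \<le> M * norm x * R" using R[OF nu] M by (simp add: mult_left_mono)
    finally show "norm (F x) \<le> (M * R) * norm x" by (simp add: ac_simps)
  qed
  moreover have "norm (F 0) \<le> M * R + R" using R[of 0] M R0 by (simp add: add_increasing)
  moreover have "\<forall>x. x \<noteq> 0 \<longrightarrow> norm (F x) \<le> (M * R + R) * norm x"
    using calculation(1) R0 by (simp add: distrib_right add_increasing2)
  ultimately show ?thesis unfolding in_B_iff by blast
qed

lemma tb_complex:
  fixes F :: "'a::complex_normed_vector \<Rightarrow> 'b::real_normed_vector"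
  assumes tb: "topology_bounded F" and M: "M > 0"
    and h: "\<forall>k::complex. \<forall>x. k \<noteq> 0 \<and> x \<noteq> 0 \<longrightarrow> norm (F (k *\<^sub>C x)) \<le> M * cmod k * norm (F x)"
  shows "in_B F"
proof -
  obtain R where R0: "R \<ge> 0" and R: "\<And>x. norm x \<le> 1 \<Longrightarrow> norm (F x) \<le> R"
    using tb_bound[OF tb] by blast
  have "\<forall>x. x \<noteq> 0 \<longrightarrow> norm (F x) \<le> (M * R) * norm x"
  proof (intro allI impI)
    fix x :: 'a assume x: "x \<noteq> 0"
    define u where "u = (1 / norm x) *\<^sub>R x"
    have u0: "u \<noteq> 0" using x by (simp add: u_def)
    have nu: "norm u \<le> 1" using x by (simp add: u_def)
    have "complex_of_real (norm x) *\<^sub>C u = norm x *\<^sub>R u" by (simp add: scaleR_scaleC)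
    also have "\<dots> = x" using x by (simp add: u_def)
    finally have xu: "complex_of_real (norm x) *\<^sub>C u = x" .
    have "norm (F x) \<le> M * cmod (complex_of_real (norm x)) * norm (F u)"
      using h[rule_format, of "complex_of_real (norm x)" u] x u0 xu by simp
    also have "\<dots> \<le> M * norm x * R" using R[OF nu] M by (simp add: mult_left_mono)
    finally show "norm (F x) \<le> (M * R) * norm x" by (simp add: ac_simps)
  qed
  moreover have "norm (F 0) \<le> M * R + R" using R[of 0] M R0 by (simp add: add_increasing)
  moreover have "\<forall>x. x \<noteq> 0 \<longrightarrow> norm (F x) \<le> (M * R + R) * norm x"
    using calculation(1) R0 by (simp add: distrib_right add_increasing2)
  ultimately show ?thesis unfolding in_B_iff by blast
qed

theorem theorem1:
  fixes F :: "'a::real_normed_vector \<Rightarrow> 'b::real_normed_vector"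
    and G :: "'c::complex_normed_vector \<Rightarrow> 'd::complex_normed_vector"
  assumes "\<exists>x::'a. x \<noteq> 0" and "\<exists>y::'b. y \<noteq> 0"
    and "\<exists>x::'c. x \<noteq> 0" and "\<exists>y::'d. y \<noteq> 0"
  shows "(in_B F \<longrightarrow> topology_bounded F)
       \<and> ((topology_bounded F \<and> (\<exists>M>0. \<forall>k::real. \<forall>x. k \<noteq> 0 \<and> x \<noteq> 0 \<longrightarrow>
              norm (F (k *\<^sub>R x)) \<le> M * \<bar>k\<bar> * norm (F x))) \<longrightarrow> in_B F)
       \<and> (in_B G \<longrightarrow> topology_bounded G)
       \<and> ((topology_bounded G \<and> (\<exists>M>0. \<forall>k::complex. \<forall>x. k \<noteq> 0 \<and> x \<noteq> 0 \<longrightarrow>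
              norm (G (k *\<^sub>C x)) \<le> M * cmod k * norm (G x))) \<longrightarrow> in_B G)"
proof (intro conjI impI)
  show "topology_bounded F" if "in_B F" using inB_tb[OF that] .
  show "topology_bounded G" if "in_B G" using inB_tb[OF that] .
  show "in_B F" if "topology_bounded F \<and> (\<exists>M>0. \<forall>k::real. \<forall>x. k \<noteq> 0 \<and> x \<noteq> 0 \<longrightarrow>
              norm (F (k *\<^sub>R x)) \<le> M * \<bar>k\<bar> * norm (F x))"
    using that tb_real[of F] by blast
  show "in_B G" if "topology_bounded G \<and> (\<exists>M>0. \<forall>k::complex. \<forall>x. k \<noteq> 0 \<and> x \<noteq> 0 \<longrightarrow>
              norm (G (k *\<^sub>C x)) \<le> M * cmod k * norm (G x))"
    using that tb_complex[of G] by blast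
qed

end
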